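(* Let $q$ be a prime power, $m\ge1$, $1\le k\le n$, $g_1,\dots,g_n\in\mathbb{F}_{q^m}$ linearly independent over $\mathbb{F}_q$, $C$ the Gabidulin code defined below and $\mathbf r\in\mathbb{F}_{q^m}^n$ a received word within the unique decoding radius, i.e. $t:=\min_{\mathbf c\in C}d_R(\mathbf c,\mathbf r)\le(n-k)/2$. Then Algorithm 1 (described in the context) performs only one iteration of its while-loop and hence only one symbolic division to find the message polynomial corresponding to the unique closest codeword.
   Context: Write $[i]:=q^i$. A $q$-linearized polynomial is $f(x)=\sum_{i=0}^{d}a_ix^{[i]}$, $a_i\in\mathbb{F}_{q^m}$; if $a_d\neq0$ then $d=\mathrm{qdeg}(f)$ ($\mathrm{qdeg}(0)=-\infty$), and $f$ is monic if $a_d=1$. $\mathcal{L}_q(x,q^m)$ is the ring of these under addition and composition $\circ$. $\Pi_{\mathbf g}(x)=\prod_{u\in\langle g_1,\dots,g_n\rangle}(x-u)$ ($\mathbb{F}_q$-span), of $q$-degree $n$; $\Lambda_{\mathbf g,\mathbf r}(x)=\sum_{i=1}^n(-1)^{n-i}r_i\det(\mathfrak D_i(\mathbf g,x))/\det(M_n(g_1,\dots,g_n))$ ($M_n(v_1,\dots,v_s)$ the $n\times s$ matrix with $(j,l)$ entry $v_l^{[j-1]}$, $\mathfrak D_i(\mathbf g,x)$ equal to $M_n(g_1,\dots,g_n,x)$ without column $i$), with $\Lambda_{\mathbf g,\mathbf r}(g_i)=r_i$. $C=\{(m(g_1),\dots,m(g_n)):m\in\mathcal{L}_q(x,q^m),\mathrm{qdeg}(m)<k\}$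 ($m$ the message polynomial). $d_R(\mathbf a,\mathbf b)$ is the $\mathbb{F}_q$-rank of the $m\times n$ $\mathbb{F}_q$-matrix expanding the coordinates of $\mathbf a-\mathbf b$ over a fixed $\mathbb{F}_q$-basis of $\mathbb{F}_{q^m}$. $\mathfrak M(\mathbf r)=\{\beta\circ[\Pi_{\mathbf g}\ \ 0]+\gamma\circ[-\Lambda_{\mathbf g,\mathbf r}\ \ x]:\beta,\gamma\in\mathcal{L}_q(x,q^m)\}$ with $h\circ[f_1\ f_2]=[h\circ f_1\ \ h\circ f_2]$. $(0,k-1)$-weighted term-over-position order on monomials $x^{[i]}e_j$: with $w_1=0,w_2=k-1$, $x^{[i_1]}e_{j_1}<x^{[i_2]}e_{j_2}$ iff $i_1+w_{j_1}<i_2+w_{j_2}$, or equality and $j_1<j_2$; $\mathrm{lm}$, $\mathrm{lt}$, $\mathrm{lpos}$ are the greatest monomial, its term, its coordinate; the weighted $q$-degree of $[f_1\ f_2]$ is $\max\{\mathrm{qdeg}f_1,\mathrm{qdeg}f_2+k-1\}$. A basis is a generating set with $\sum a_i\circ f^{(i)}=0\Rightarrow a_i=0$; it is minimal if no element $b$ reduces modulo the others, where $f$ reduces modulo $F$ in one step if $f-\sum_i(b_ix^{[a_i]})\circ f^{(i)}$ with $f^{(i)}\in F$, $\mathrm{lm}(f)=x^{[a_i]}\circ\mathrm{lm}(f^{(i)})$ and $\mathrm{lt}(f)=\sum_i(b_ix^{[a_i]})\circ\mathrm{lt}(f^{(i)})$. Algorithm 1: (1) compute $\Pi_{\mathbf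 g},\Lambda_{\mathbf g,\mathbf r}$; (2) compute a minimal basis $\{b^{(1)},b^{(2)}\}$ of $\mathfrak M(\mathbf r)$ w.r.t. the $(0,k-1)$-weighted order with $\mathrm{lpos}(b^{(1)})=1$, $\mathrm{lpos}(b^{(2)})=2$; (3) let $\ell_1,\ell_2$ be their weighted $q$-degrees; (4) list $:=$ empty, $j:=0$; while list is empty: for all $\beta\in\mathcal{L}_q(x,q^m)$ with $\mathrm{qdeg}(\beta)\le\ell_2-\ell_1+j$ and all monic $\gamma$ with $\mathrm{qdeg}(\gamma)=j$, let $[f_1\ f_2]:=\beta\circ b^{(1)}+\gamma\circ b^{(2)}$, and if some $m\in\mathcal{L}_q(x,q^m)$ satisfies $f_1=-f_2\circ m$ (checked by a symbolic division), add $m$ to the list; $j:=j+1$. Return the list. *)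

theory Defs
  imports "HOL-Computational_Algebra.Polynomial" "Jordan_Normal_Form.Determinant"
begin

(* Ambient field F_{q^m} is a finite field type 'a with CARD('a) = q^m;
   the subfield F_q is the fixed field of x |-> x^q. *)
definition Fq :: "nat \<Rightarrow> 'a::field set" where
  "Fq q = {x. x ^ q = x}"

(* q-linearized polynomials, represented as genuine polynomials whose only
   nonzero coefficients sit at exponents q^i;  composition is pcompose. *)
definition linearized :: "nat \<Rightarrow> 'a::field poly \<Rightarrow> bool" where
  "linearized q f \<longleftrightarrow> (\<forall>i. coeff f i \<noteq> 0 \<longrightarrow> (\<exists>j. i = q ^ j))"

definition qdeg :: "nat \<Rightarrow> 'a::field poly \<Rightarrow> nat" where
  "qdeg q f = (THE d. degree f = q ^ d)"

(* qdeg f \<le> D, with qdeg 0 = -\<infinity> *)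
definition qdeg_le :: "nat \<Rightarrow> 'a::field poly \<Rightarrow> int \<Rightarrow> bool" where
  "qdeg_le q f D \<longleftrightarrow> f = 0 \<or> int (qdeg q f) \<le> D"

definition qmonom :: "nat \<Rightarrow> nat \<Rightarrow> 'a::field poly" where
  "qmonom q i = monom 1 (q ^ i)"

definition Fq_span :: "nat \<Rightarrow> nat \<Rightarrow> (nat \<Rightarrow> 'a::field) \<Rightarrow> 'a set" where
  "Fq_span q n g = {(\<Sum>i<n. c i * g i) | c. \<forall>i<n. c i \<in> Fq q}"

definition Fq_lin_indep :: "nat \<Rightarrow> nat \<Rightarrow> (nat \<Rightarrow> 'a::field) \<Rightarrow> bool" where
  "Fq_lin_indep q n g \<longleftrightarrow>
     (\<forall>c. (\<forall>i<n. c i \<in> Fq q) \<and> (\<Sum>i<n. c i * g i) = 0 \<longrightarrow> (\<forall>i<n. c i = 0))"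

definition Pi_g :: "nat \<Rightarrow> nat \<Rightarrow> (nat \<Rightarrow> 'a::field) \<Rightarrow> 'a poly" where
  "Pi_g q n g = (\<Prod>u\<in>Fq_span q n g. [:- u, 1:])"

(* Moore matrix M_n(g_0..g_{n-1}) (0-based indices): entry (j,l) = g_l^{[j]} *)
definition moore :: "nat \<Rightarrow> nat \<Rightarrow> (nat \<Rightarrow> 'a::field) \<Rightarrow> 'a mat" where
  "moore q n g = mat n n (\<lambda>(j, l). g l ^ (q ^ j))"

(* \<frak>D_i(g,x): the n x (n+1) matrix M_n(g_0,...,g_{n-1},x) (entries in 'a poly)
   with column i removed (0-based i) *)
definition Dmat :: "nat \<Rightarrow> nat \<Rightarrow> (nat \<Rightarrow> 'a::field) \<Rightarrow> nat \<Rightarrow> 'a poly mat" where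
  "Dmat q n g i = mat n n (\<lambda>(j, l).
     (let s = (if l < i then l else Suc l) in
      if s < n then [: g s ^ (q ^ j) :] else qmonom q j))"

(* \<Lambda>_{g,r}; the paper's index i (1-based) is i+1 here, so (-1)^{n-i} becomes (-1)^{n-1-i} *)
definition Lambda_gr :: "nat \<Rightarrow> nat \<Rightarrow> (nat \<Rightarrow> 'a::field) \<Rightarrow> (nat \<Rightarrow> 'a) \<Rightarrow> 'a poly" where
  "Lambda_gr q n g r =
     (\<Sum>i<n. smult ((-1) ^ (n - 1 - i) * r i / det (moore q n g)) (det (Dmat q n g i)))"

definition codeword :: "(nat \<Rightarrow> 'a::field) \<Rightarrow> 'a poly \<Rightarrow> nat \<Rightarrow> 'a" where
  "codeword g mm = (\<lambda>i. poly mm (g i))"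

definition gabidulin :: "nat \<Rightarrow> nat \<Rightarrow> (nat \<Rightarrow> 'a::field) \<Rightarrow> (nat \<Rightarrow> 'a) set" where
  "gabidulin q k g = {codeword g mm | mm. linearized q mm \<and> degree mm < q ^ k}"

(* Rank distance: F_q-rank of the m x n expansion matrix of a - b, i.e. the
   least number of elements of F_{q^m} whose F_q-span contains all coordinates
   a_i - b_i (the dimension of the F_q-column space of the expansion). *)
definition rank_dist :: "nat \<Rightarrow> nat \<Rightarrow> (nat \<Rightarrow> 'a::field) \<Rightarrow> (nat \<Rightarrow> 'a) \<Rightarrow> nat" where
  "rank_dist q n a b = (LEAST d. \<exists>v::nat \<Rightarrow> 'a. \<forall>i<n. a i - b i \<in> Fq_span q d v)"

(* elements of L_q(x,q^m)^2: pairs [f1 f2] *)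
type_synonym 'a lvec = "'a poly \<times> 'a poly"

definition lcomp :: "'a::field poly \<Rightarrow> 'a lvec \<Rightarrow> 'a lvec" where
  "lcomp h f = (pcompose h (fst f), pcompose h (snd f))"

definition ladd :: "'a::field lvec \<Rightarrow> 'a lvec \<Rightarrow> 'a lvec" where
  "ladd f h = (fst f + fst h, snd f + snd h)"

definition Mod_r :: "nat \<Rightarrow> nat \<Rightarrow> (nat \<Rightarrow> 'a::field) \<Rightarrow> (nat \<Rightarrow> 'a) \<Rightarrow> 'a lvec set" where
  "Mod_r q n g r = {ladd (lcomp \<beta> (Pi_g q n g, 0)) (lcomp \<gamma> (- Lambda_gr q n g r, [:0, 1:])) |
      \<beta> \<gamma>. linearized q \<beta> \<and> linearized q \<gamma>}"

(* (0,k-1)-weighted term-over-position order: leading position, leading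
   (unweighted) exponent i of lm = x^{[i]} e_j, leading coefficient *)
definition lpos :: "nat \<Rightarrow> nat \<Rightarrow> 'a::field lvec \<Rightarrow> nat" where
  "lpos q k f = (if snd f = 0 then 1 else if fst f = 0 then 2
      else if int (qdeg q (fst f)) > int (qdeg q (snd f)) + int k - 1 then 1 else 2)"

definition lcomp_at :: "nat \<Rightarrow> 'a lvec \<Rightarrow> 'a poly" where
  "lcomp_at j f = (if j = 1 then fst f else snd f)"

definition lexp :: "nat \<Rightarrow> nat \<Rightarrow> 'a::field lvec \<Rightarrow> nat" where
  "lexp q k f = qdeg q (lcomp_at (lpos q k f) f)"

definition lcoef :: "nat \<Rightarrow> nat \<Rightarrow> 'a::field lvec \<Rightarrow> 'a" where
  "lcoef q k f = lead_coeff (lcomp_at (lpos q k f) f)"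

definition wqdeg :: "nat \<Rightarrow> nat \<Rightarrow> 'a::field lvec \<Rightarrow> int" where
  "wqdeg q k f = (if fst f = 0 then int (qdeg q (snd f)) + int k - 1
      else if snd f = 0 then int (qdeg q (fst f))
      else max (int (qdeg q (fst f))) (int (qdeg q (snd f)) + int k - 1))"

(* one-step reduction of f modulo F:  lm f = x^{[a_h]} \<circ> lm h  and
   lt f = \<Sum>_h (b_h x^{[a_h]}) \<circ> lt h, where
   (b x^{[a]}) \<circ> (c x^{[i]} e_j) = b c^{q^a} x^{[a+i]} e_j *)
definition reduces1 :: "nat \<Rightarrow> nat \<Rightarrow> 'a::field lvec \<Rightarrow> 'a lvec set \<Rightarrow> bool" where
  "reduces1 q k f F \<longleftrightarrow> f \<noteq> (0, 0) \<and>
     (\<exists>S a b. finite S \<and> S \<subseteq> F \<and>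
        (\<forall>h\<in>S. h \<noteq> (0, 0) \<and> lpos q k h = lpos q k f \<and> lexp q k f = a h + lexp q k h) \<and>
        lcoef q k f = (\<Sum>h\<in>S. b h * lcoef q k h ^ (q ^ a h)))"

definition lcombo :: "('a lvec \<Rightarrow> 'a::field poly) \<Rightarrow> 'a lvec set \<Rightarrow> 'a lvec" where
  "lcombo c B = ((\<Sum>h\<in>B. pcompose (c h) (fst h)), (\<Sum>h\<in>B. pcompose (c h) (snd h)))"

definition is_basis :: "nat \<Rightarrow> 'a::field lvec set \<Rightarrow> 'a lvec set \<Rightarrow> bool" where
  "is_basis q M B \<longleftrightarrow> finite B \<and>
     M = {lcombo c B | c. \<forall>h\<in>B. linearized q (c h)} \<and>
     (\<forall>c. (\<forall>h\<in>B. linearized q (c h)) \<and> lcombo c B = (0, 0) \<longrightarrow> (\<forall>h\<in>B. c h = 0))"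

definition minimal_basis :: "nat \<Rightarrow> nat \<Rightarrow> 'a::field lvec set \<Rightarrow> 'a lvec set \<Rightarrow> bool" where
  "minimal_basis q k M B \<longleftrightarrow> is_basis q M B \<and> (\<forall>b\<in>B. \<not> reduces1 q k b (B - {b}))"

(* Algorithm 1, iteration j of the while-loop: the pairs (\<beta>,\<gamma>) tried ... *)
definition alg_cands :: "nat \<Rightarrow> int \<Rightarrow> int \<Rightarrow> nat \<Rightarrow> ('a::field poly \<times> 'a poly) set" where
  "alg_cands q l1 l2 j = {(\<beta>, \<gamma>). linearized q \<beta> \<and> qdeg_le q \<beta> (l2 - l1 + int j) \<and>
      linearized q \<gamma> \<and> \<gamma> \<noteq> 0 \<and> lead_coeff \<gamma> = 1 \<and> qdeg q \<gamma> = j}"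

(* ... and the list of message polynomials found in that iteration *)
definition alg_list :: "nat \<Rightarrow> 'a::field lvec \<Rightarrow> 'a lvec \<Rightarrow> int \<Rightarrow> int \<Rightarrow> nat \<Rightarrow> 'a poly set" where
  "alg_list q b1 b2 l1 l2 j = {mm. linearized q mm \<and>
      (\<exists>(\<beta>, \<gamma>) \<in> alg_cands q l1 l2 j.
         let f = ladd (lcomp \<beta> b1) (lcomp \<gamma> b2) in fst f = - pcompose (snd f) mm)}"

end

theory Submission
  imports Defs
begin

locale ffq =
  fixes q :: nat and e :: nat and ty :: "'a::{finite,field} itself"
  assumes charp: "prime CHAR('a)" and qe: "q = CHAR('a)^e" and epos: "e > 0"
begin

lemma q_ge2: "q \<ge> 2"
proof -
  have "CHAR('a) \<ge> 2" using charp prime_ge_2_nat by blast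
  moreover have "CHAR('a) ^ 1 \<le> CHAR('a) ^ e"
    by (rule power_increasing) (use epos calculation in auto)
  ultimately show ?thesis using qe by simp
qed

lemma q_pos: "q > 0" using q_ge2 by simp

lemma frob_gen:
  fixes x y :: "'b::comm_semiring_1"
  assumes "CHAR('b) = CHAR('a)"
  shows "(x + y) ^ (q ^ j) = x ^ (q ^ j) + y ^ (q ^ j)"
proof -
  have "q ^ j = CHAR('b) ^ (e * j)" using assms by (simp add: qe power_mult)
  thus ?thesis using freshmans_dream'[where m="q^j" and n="e*j" and x=x and y=y] charp assms by simp
qed

lemma poly_add_gen:
  fixes P :: "'b::comm_semiring_1 poly"
  assumes "CHAR('b) = CHAR('a)" "\<forall>i. coeff P i \<noteq> 0 \<longrightarrow> (\<exists>j. i = q ^ j)"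
  shows "poly P (x + y) = poly P x + poly P y"
proof -
  have "\<And>i. coeff P i * (x + y) ^ i = coeff P i * x ^ i + coeff P i * y ^ i"
  proof -
    fix i
    show "coeff P i * (x + y) ^ i = coeff P i * x ^ i + coeff P i * y ^ i"
    proof (cases "coeff P i = 0")
      case False
      then obtain j where "i = q ^ j" using assms(2) by blast
      thus ?thesis using frob_gen[OF assms(1)] by (simp add: distrib_left)
    qed simp
  qed
  thus ?thesis unfolding poly_altdef by (simp add: sum.distrib)
qed

lemma lin_coeff0: "linearized q (f::'a poly) \<Longrightarrow> coeff f 0 = 0"
  unfolding linearized_def using q_pos by (metis less_numeral_extra(3) zero_less_power)

lemma lin_poly0: "linearized q (f::'a poly) \<Longrightarrow> poly f 0 = 0"
  by (simp add: lin_coeff0 poly_0_coeff_0)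

lemma lin_poly_add: "linearized q (f::'a poly) \<Longrightarrow> poly f (x + y) = poly f x + poly f y"
  by (rule poly_add_gen) (auto simp: linearized_def)

lemma lin_pcomp_add: "linearized q (f::'a poly) \<Longrightarrow> f \<circ>\<^sub>p (a + b) = f \<circ>\<^sub>p a + f \<circ>\<^sub>p b"
  unfolding pcompose_altdef
  by (rule poly_add_gen) (auto simp: linearized_def coeff_map_poly)

lemma lin_poly_uminus: "linearized q (f::'a poly) \<Longrightarrow> poly f (- x) = - poly f x"
  using lin_poly_add[of f x "-x"] lin_poly0[of f] by (simp add: add_eq_0_iff)

lemma lin_poly_diff: "linearized q (f::'a poly) \<Longrightarrow> poly f (x - y) = poly f x - poly f y"
  using lin_poly_add[of f x "-y"] lin_poly_uminus[of f y] by simp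

lemma lin_pcomp_0: "linearized q (f::'a poly) \<Longrightarrow> f \<circ>\<^sub>p 0 = 0"
  by (simp add: lin_coeff0 pcompose_0')

lemma lin_pcomp_uminus: "linearized q (f::'a poly) \<Longrightarrow> f \<circ>\<^sub>p (- a) = - (f \<circ>\<^sub>p a)"
  using lin_pcomp_add[of f a "-a"] lin_pcomp_0[of f] by (simp add: add_eq_0_iff)

lemma lin_pcomp_diff: "linearized q (f::'a poly) \<Longrightarrow> f \<circ>\<^sub>p (a - b) = f \<circ>\<^sub>p a - f \<circ>\<^sub>p b"
  using lin_pcomp_add[of f a "-b"] lin_pcomp_uminus[of f b] by simp

lemma Fq_pow: "c \<in> Fq q \<Longrightarrow> c ^ (q ^ j) = (c :: 'a)"
  unfolding Fq_def by (induction j) (auto simp: power_mult)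

lemma lin_poly_scal: "linearized q (f::'a poly) \<Longrightarrow> c \<in> Fq q \<Longrightarrow> poly f (c * x) = c * poly f x"
proof -
  assume f: "linearized q f" and c: "c \<in> Fq q"
  have *: "\<And>i. coeff f i * (c * x) ^ i = c * (coeff f i * x ^ i)"
  proof -
    fix i
    show "coeff f i * (c * x) ^ i = c * (coeff f i * x ^ i)"
    proof (cases "coeff f i = 0")
      case False
      then obtain j where "i = q ^ j" using f unfolding linearized_def by blast
      thus ?thesis using Fq_pow[OF c, of j] by (simp add: power_mult_distrib ac_simps)
    qed simp
  qed
  show ?thesis by (simp only: poly_altdef sum_distrib_left *)
qed

lemma lin_poly_sum: "linearized q (f::'a poly) \<Longrightarrow> poly f (\<Sum>i\<in>A. h i) = (\<Sum>i\<in>A. poly f (h i))"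
  by (induction A rule: infinite_finite_induct) (auto simp: lin_poly0 lin_poly_add)

lemma lin_0[simp]: "linearized q (0::'a poly)" by (simp add: linearized_def)
lemma lin_X: "linearized q [:0, 1::'a:]"
  unfolding linearized_def by (auto simp: coeff_pCons split: nat.splits intro: exI[of _ 0])
lemma lin_add: "linearized q (f::'a poly) \<Longrightarrow> linearized q g \<Longrightarrow> linearized q (f + g)"
  unfolding linearized_def by (metis add.right_neutral coeff_add)
lemma lin_uminus: "linearized q (f::'a poly) \<Longrightarrow> linearized q (- f)"
  unfolding linearized_def by simp
lemma lin_diff: "linearized q (f::'a poly) \<Longrightarrow> linearized q g \<Longrightarrow> linearized q (f - g)"
  unfolding linearized_def by (metis coeff_diff diff_zero)
lemma lin_smult: "linearized q (f::'a poly) \<Longrightarrow> linearized q (smult c f)"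
  unfolding linearized_def by simp
lemma lin_monom: "linearized q (monom (c::'a) (q ^ j))"
  unfolding linearized_def by (auto simp: coeff_monom)
lemma lin_sum: "(\<And>i. i \<in> A \<Longrightarrow> linearized q (h i :: 'a poly)) \<Longrightarrow> linearized q (\<Sum>i\<in>A. h i)"
  by (induction A rule: infinite_finite_induct) (auto intro: lin_add)

lemma lin_pow_q: assumes "linearized q (f::'a poly)" shows "linearized q (f ^ q)"
proof -
  have "f ^ q = (\<Sum>i\<le>degree f. monom (coeff f i) i) ^ q" by (simp add: poly_as_sum_of_monoms)
  also have "\<dots> = (\<Sum>i\<le>degree f. monom (coeff f i) i ^ q)"
  proof -
    have "q = CHAR('a poly) ^ e" by (simp add: qe)
    thus ?thesis using freshmans_dream_sum'[where m=q and n=e and f="\<lambda>i. monom (coeff f i) i" and A="{..degree f}"] charp by simp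
  qed
  also have "\<dots> = (\<Sum>i\<le>degree f. monom (coeff f i ^ q) (i * q))" by (simp add: monom_power)
  finally have eq: "f ^ q = \<dots>" .
  show ?thesis unfolding eq
  proof (rule lin_sum)
    fix i
    show "linearized q (monom (coeff f i ^ q) (i * q))"
    proof (cases "coeff f i = 0")
      case True thus ?thesis using q_pos by (simp add: zero_power)
    next
      case False
      then obtain j where "i = q ^ j" using assms unfolding linearized_def by blast
      hence "i * q = q ^ Suc j" by simp
      thus ?thesis using lin_monom by metis
    qed
  qed
qed

lemma lin_pow_qpow: "linearized q (f::'a poly) \<Longrightarrow> linearized q (f ^ (q ^ s))"
proof (induction s)
  case 0 thus ?case by simp
next
  case (Suc s)
  have "f ^ (q ^ Suc s) = (f ^ (q ^ s)) ^ q" by (simp only: power_Suc2 power_mult)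
  thus ?case using lin_pow_q Suc by simp
qed

lemma lin_pcomp: assumes f: "linearized q (f::'a poly)" and g: "linearized q g"
  shows "linearized q (f \<circ>\<^sub>p g)"
proof -
  have "f \<circ>\<^sub>p g = (\<Sum>i\<le>degree f. [:coeff f i:] * g ^ i)"
    unfolding pcompose_altdef poly_altdef by (simp add: coeff_map_poly degree_map_poly)
  also have "\<dots> = (\<Sum>i\<le>degree f. smult (coeff f i) (g ^ i))" by simp
  finally have eq: "f \<circ>\<^sub>p g = \<dots>" .
  show ?thesis unfolding eq
  proof (rule lin_sum)
    fix i
    show "linearized q (smult (coeff f i) (g ^ i))"
    proof (cases "coeff f i = 0")
      case False
      then obtain j where "i = q ^ j" using f unfolding linearized_def by blast
      thus ?thesis using lin_smult lin_pow_qpow g by simp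
    qed simp
  qed
qed

lemma qdeg_eq: "degree (f::'a poly) = q ^ d \<Longrightarrow> qdeg q f = d"
  unfolding qdeg_def
  by (rule the_equality) (use q_ge2 power_inject_exp in auto)

lemma lin_degree: "linearized q (f::'a poly) \<Longrightarrow> f \<noteq> 0 \<Longrightarrow> degree f = q ^ qdeg q f"
proof -
  assume f: "linearized q f" "f \<noteq> 0"
  have "coeff f (degree f) \<noteq> 0" using f(2) by simp
  then obtain j where "degree f = q ^ j" using f unfolding linearized_def by blast
  thus ?thesis using qdeg_eq by simp
qed

lemma lin_degree_pos: "linearized q (f::'a poly) \<Longrightarrow> f \<noteq> 0 \<Longrightarrow> degree f > 0"
  using lin_degree q_pos by (metis zero_less_power)

lemma pcomp_nz: "linearized q (f::'a poly) \<Longrightarrow> linearized q g \<Longrightarrow> f \<noteq> 0 \<Longrightarrow> g \<noteq> 0 \<Longrightarrow> f \<circ>\<^sub>p g \<noteq> 0"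
  using pcompose_eq_0 lin_degree_pos by blast

lemma qdeg_pcomp: "linearized q (f::'a poly) \<Longrightarrow> linearized q g \<Longrightarrow> f \<noteq> 0 \<Longrightarrow> g \<noteq> 0 \<Longrightarrow>
   qdeg q (f \<circ>\<^sub>p g) = qdeg q f + qdeg q g"
  by (rule qdeg_eq) (simp add: degree_pcompose lin_degree power_add)

end

primrec ann :: "nat \<Rightarrow> (nat \<Rightarrow> 'a::field) \<Rightarrow> nat \<Rightarrow> 'a poly" where
  "ann q v 0 = [:0, 1:]"
| "ann q v (Suc j) = (ann q v j) ^ q - smult ((poly (ann q v j) (v j)) ^ (q - 1)) (ann q v j)"

context ffq begin

lemma frob1: "((x::'a) + y) ^ q = x ^ q + y ^ q"
  using frob_gen[of x y 1] by simp

lemma Fq_0: "(0::'a) \<in> Fq q" using q_pos by (simp add: Fq_def)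
lemma Fq_1: "(1::'a) \<in> Fq q" by (simp add: Fq_def)
lemma Fq_add: "(x::'a) \<in> Fq q \<Longrightarrow> y \<in> Fq q \<Longrightarrow> x + y \<in> Fq q"
  by (simp add: Fq_def frob1)
lemma neg_pow_q: "(- (x::'a)) ^ q = - (x ^ q)"
proof -
  have "(x + - x) ^ q = x ^ q + (- x) ^ q" by (rule frob1)
  thus ?thesis using q_pos by (simp add: zero_power add_eq_0_iff)
qed
lemma Fq_uminus: "(x::'a) \<in> Fq q \<Longrightarrow> - x \<in> Fq q"
  by (simp add: Fq_def neg_pow_q)
lemma Fq_diff: "(x::'a) \<in> Fq q \<Longrightarrow> y \<in> Fq q \<Longrightarrow> x - y \<in> Fq q"
  using Fq_add[of x "-y"] Fq_uminus[of y] by simp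
lemma Fq_mult: "(x::'a) \<in> Fq q \<Longrightarrow> y \<in> Fq q \<Longrightarrow> x * y \<in> Fq q"
  by (simp add: Fq_def power_mult_distrib)

lemma span_Suc:
  assumes "(x::'a) \<in> Fq_span q (Suc j) v"
  shows "\<exists>y l. y \<in> Fq_span q j v \<and> l \<in> Fq q \<and> x = y + l * v j"
proof -
  obtain c where c: "\<forall>i<Suc j. c i \<in> Fq q" "x = (\<Sum>i<Suc j. c i * v i)"
    using assms unfolding Fq_span_def by blast
  have "(\<Sum>i<j. c i * v i) \<in> Fq_span q j v" unfolding Fq_span_def using c(1) by auto
  thus ?thesis using c by (intro exI[of _ "\<Sum>i<j. c i * v i"] exI[of _ "c j"]) auto
qed

lemma span_mem: "i < n \<Longrightarrow> (v i::'a) \<in> Fq_span q n v"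
proof -
  assume i: "i < n"
  have "(\<Sum>l<n. (if l = i then 1 else 0) * v l) = (\<Sum>l<n. if l = i then v l else 0)"
    by (rule sum.cong) auto
  also have "\<dots> = v i" using i by (simp add: sum.delta)
  finally have eq: "(\<Sum>l<n. (if l = i then 1 else 0) * v l) = v i" .
  have fq: "\<forall>l<n. (if l = i then 1 else 0 :: 'a) \<in> Fq q" using Fq_0 Fq_1 by auto
  show ?thesis unfolding Fq_span_def
    by (rule CollectI, rule exI[of _ "\<lambda>l. if l = i then 1 else (0::'a)"]) (use eq fq in simp)
qed

lemma lin_poly_span:
  assumes f: "linearized q f" and x: "(x::'a) \<in> Fq_span q d v"
  shows "poly f x \<in> Fq_span q d (\<lambda>i. poly f (v i))"
proof -
  obtain c where c: "\<forall>i<d. c i \<in> Fq q" "x = (\<Sum>i<d. c i * v i)"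
    using x unfolding Fq_span_def by blast
  have "poly f x = (\<Sum>i<d. c i * poly f (v i))"
    unfolding c(2) lin_poly_sum[OF f] using lin_poly_scal[OF f] c(1) by simp
  thus ?thesis unfolding Fq_span_def using c(1) by blast
qed

lemma span_zero: "(\<forall>i<d. v i = 0) \<Longrightarrow> (x::'a) \<in> Fq_span q d v \<Longrightarrow> x = 0"
  unfolding Fq_span_def by auto

lemma lin_vanish_span:
  assumes f: "linearized q f" and z: "\<forall>i<d. poly f (v i) = 0" and x: "(x::'a) \<in> Fq_span q d v"
  shows "poly f x = 0"
  using lin_poly_span[OF f x] span_zero[of d "\<lambda>i. poly f (v i)"] z by blast

lemma ann_props: "linearized q (ann q v j) \<and> degree (ann q v j) = q ^ j \<and> lead_coeff (ann q v j) = (1::'a)"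
proof (induction j)
  case 0 thus ?case using lin_X by simp
next
  case (Suc j)
  define a where "a = ann q v j"
  define s where "s = smult ((poly a (v j)) ^ (q - 1)) a"
  have a: "linearized q a" "degree a = q ^ j" "lead_coeff a = 1" using Suc unfolding a_def by auto
  have eq: "ann q v (Suc j) = a ^ q - s" unfolding a_def s_def by simp
  have anz: "a \<noteq> 0" using a(3) by auto
  have dpow: "degree (a ^ q) = q ^ Suc j" using a anz by (simp add: degree_power_eq mult.commute)
  have ds: "degree s < q ^ Suc j"
  proof -
    have "degree s \<le> q ^ j" unfolding s_def using a by simp
    also have "q ^ j < q ^ Suc j" using q_ge2 by simp
    finally show ?thesis .
  qed
  have dg: "degree (a ^ q - s) = q ^ Suc j"
    using degree_add_eq_left[of "- s" "a ^ q"] dpow ds by simp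
  have lcp: "coeff (a ^ q) (q ^ Suc j) = 1" using lead_coeff_power[of a q] a(3) dpow by simp
  have lc: "lead_coeff (a ^ q - s) = 1"
    unfolding dg using lcp ds by (simp add: coeff_eq_0)
  have lin: "linearized q (a ^ q - s)" unfolding s_def using a
    by (intro lin_diff lin_pow_q lin_smult)
  show ?case using eq dg lc lin by simp
qed

lemma ann_lin: "linearized q (ann q v j :: 'a poly)" using ann_props by blast
lemma ann_degree: "degree (ann q v j :: 'a poly) = q ^ j" using ann_props by blast
lemma ann_lc: "lead_coeff (ann q v j :: 'a poly) = 1" using ann_props by blast
lemma ann_nz: "(ann q v j :: 'a poly) \<noteq> 0" by (metis ann_lc leading_coeff_0_iff zero_neq_one)
lemma ann_qdeg: "qdeg q (ann q v j :: 'a poly) = j" using ann_degree qdeg_eq by blast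

lemma ann_vanish: "(x::'a) \<in> Fq_span q j v \<Longrightarrow> poly (ann q v j) x = 0"
proof (induction j arbitrary: x)
  case 0 thus ?case unfolding Fq_span_def by simp
next
  case (Suc j)
  obtain y l where yl: "y \<in> Fq_span q j v" "l \<in> Fq q" "x = y + l * v j"
    using span_Suc[OF Suc.prems] by blast
  define a where "a = ann q v j"
  define c where "c = poly a (v j)"
  have alin: "linearized q a" unfolding a_def by (rule ann_lin)
  have "poly a x = l * c"
    unfolding yl(3) c_def using lin_poly_add[OF alin] lin_poly_scal[OF alin yl(2)] Suc.IH[OF yl(1)]
    by (simp add: a_def)
  moreover have "l ^ q = l" using yl(2) by (simp add: Fq_def)
  moreover have "c ^ (q - 1) * c = c ^ q" using q_pos
    by (metis Suc_diff_1 power_Suc2)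
  ultimately have "(poly a x) ^ q - c ^ (q - 1) * poly a x = 0"
    by (simp add: power_mult_distrib ac_simps)
  thus ?case by (simp add: a_def c_def poly_power)
qed

end

lemma ff_pow_card: "(x::'a::{finite,field}) ^ card (UNIV :: 'a set) = x"
proof (cases "x = 0")
  case False
  have "x * (\<Prod>y\<in>UNIV-{0}. x * y) = x * x ^ (card (UNIV :: 'a set) - 1) * \<Prod>(UNIV-{0})"
    by (simp add: prod.distrib mult_ac)
  also have "x * x ^ (card (UNIV :: 'a set) - 1) = x ^ Suc (card (UNIV :: 'a set) - 1)"
    by (subst power_Suc) auto
  also have "Suc (card (UNIV :: 'a set) - 1) = card (UNIV :: 'a set)"
    using finite_UNIV_card_ge_0[where ?'a = 'a] by simp
  also have "(\<Prod>y\<in>UNIV-{0}. x * y) = (\<Prod>y\<in>UNIV-{0}. y)"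
    by (rule prod.reindex_bij_witness[of _ "\<lambda>y. y / x" "\<lambda>y. x * y"]) (use False in auto)
  finally show ?thesis
    by simp
qed (use finite_UNIV_card_ge_0[where ?'a = 'a] in auto)

lemma roots_card_le: "(p::'a::idom poly) \<noteq> 0 \<Longrightarrow> (\<forall>x\<in>S. poly p x = 0) \<Longrightarrow> card S \<le> degree p"
proof -
  assume p: "p \<noteq> 0" and S: "\<forall>x\<in>S. poly p x = 0"
  have "S \<subseteq> {x. poly p x = 0}" using S by auto
  hence "card S \<le> card {x. poly p x = 0}" using poly_roots_finite[OF p] by (rule card_mono[rotated])
  also have "\<dots> \<le> degree p" by (rule card_poly_roots_bound[OF p])
  finally show ?thesis .
qed

lemma nat_geom: "Suc (r * (\<Sum>i<m. (Suc r) ^ i)) = (Suc r) ^ m"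
  by (induction m) (simp_all add: algebra_simps)

locale ffqm = ffq q e ty for q e and ty :: "'a::{finite,field} itself" +
  fixes m :: nat
  assumes cardq: "card (UNIV :: 'a set) = q ^ m" and mpos: "m \<ge> 1"
begin

lemma card_Fq: "card (Fq q :: 'a set) \<ge> q"
proof -
  define N where "N = q ^ m"
  define X where "X = ([:0, 1:] :: 'a poly)"
  define s where "s = (\<Sum>i<m. q ^ i)"
  have Ns: "N = Suc ((q - 1) * s)" unfolding N_def s_def using nat_geom[of "q - 1" m] q_pos
    by simp
  define Y where "Y = X ^ (q - 1)"
  define H where "H = (\<Sum>i<s. Y ^ i)"
  have h: "Y ^ s - 1 = (Y - 1) * H" unfolding H_def by (rule power_diff_1_eq)
  have XYs: "X * Y ^ s = X ^ N" unfolding Y_def Ns by (simp add: power_mult)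
  have qq: "Suc (q - 1) = q" using q_pos by simp
  have XY: "X * Y = X ^ q"
  proof -
    have "X * Y = X ^ Suc (q - 1)" unfolding Y_def by (simp only: power_Suc)
    thus ?thesis by (simp only: qq)
  qed
  have "X ^ N - X = X * (Y ^ s - 1)" using XYs by (simp add: right_diff_distrib)
  also have "\<dots> = X * (Y - 1) * H" using h by simp
  also have "\<dots> = (X * Y - X) * H" by (simp add: right_diff_distrib)
  also have "\<dots> = (X ^ q - X) * H" using XY by simp
  finally have fact: "X ^ N - X = (X ^ q - X) * H" .
  have Nq: "N \<ge> q" unfolding N_def using power_increasing[of 1 m q] mpos q_pos by simp
  have dX: "degree X = 1" "X \<noteq> 0" unfolding X_def by auto
  have dXp: "\<And>k. degree (X ^ k) = k" using dX by (simp add: degree_power_eq)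
  have dXN: "degree (X ^ N - X) = N"
  proof -
    have "degree (- X) < degree (X ^ N)" using dX dXp[of N] Nq q_ge2 by simp
    hence "degree (X ^ N + - X) = N" using dXp[of N] by (simp only: degree_add_eq_left)
    thus ?thesis by simp
  qed
  have dXq: "degree (X ^ q - X) = q"
  proof -
    have "degree (- X) < degree (X ^ q)" using dX dXp[of q] q_ge2 by simp
    hence "degree (X ^ q + - X) = q" using dXp[of q] by (simp only: degree_add_eq_left)
    thus ?thesis by simp
  qed
  have nz: "X ^ N - X \<noteq> 0" using dXN Nq q_ge2 by auto
  have Hnz: "H \<noteq> 0" using nz fact by auto
  have Aq: "X ^ q - X \<noteq> 0" using dXq q_ge2 by auto
  have dH: "degree H = N - q" using degree_mult_eq[OF Aq Hnz] fact dXN dXq by simp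
  have all: "\<forall>x::'a. poly (X ^ q - X) x = 0 \<or> poly H x = 0"
  proof
    fix x :: 'a
    have e1: "poly (X ^ N - X) x = x ^ N - x" by (simp add: X_def poly_power)
    have e2: "x ^ N = x" using ff_pow_card[of x] cardq unfolding N_def by simp
    have "poly (X ^ N - X) x = 0" using e1 e2 by simp
    thus "poly (X ^ q - X) x = 0 \<or> poly H x = 0" unfolding fact by simp
  qed
  have rootsA: "{x. poly (X ^ q - X) x = 0} = Fq q" by (auto simp: Fq_def X_def poly_power)
  have "UNIV \<subseteq> Fq q \<union> {x. poly H x = 0}" using all rootsA by auto
  hence c1: "card (UNIV :: 'a set) \<le> card (Fq q \<union> {x. poly H x = 0})" by (intro card_mono) auto
  have c2: "card (Fq q \<union> {x. poly H x = 0}) \<le> card (Fq q :: 'a set) + card {x. poly H x = 0}" by (rule card_Un_le)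
  have c3: "card {x. poly H x = 0} \<le> N - q" using card_poly_roots_bound[OF Hnz] dH by simp
  have c4: "card (UNIV :: 'a set) = N" using cardq unfolding N_def .
  have c6: "card (UNIV :: 'a set) \<le> card (Fq q :: 'a set) + card {x. poly H x = 0}"
    using c1 c2 by (rule order_trans)
  have c7: "card (Fq q :: 'a set) + card {x. poly H x = 0} \<le> card (Fq q :: 'a set) + (N - q)"
    using c3 by (rule add_left_mono)
  have c5: "N \<le> card (Fq q :: 'a set) + (N - q)" using order_trans[OF c6 c7] unfolding c4 .
  define A where "A = card (Fq q :: 'a set)"
  have "N \<le> A + (N - q)" using c5 unfolding A_def .
  hence "q \<le> A" using Nq by linarith
  thus ?thesis unfolding A_def .
qed

lemma card_span:
  assumes ind: "Fq_lin_indep q n g"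
  shows "card (Fq_span q n (g::nat \<Rightarrow> 'a)) \<ge> q ^ n"
proof -
  define F where "F = (\<lambda>c. \<Sum>i<n. c i * g i)"
  define P where "P = PiE {..<n} (\<lambda>_. Fq q :: 'a set)"
  have inj: "inj_on F P"
  proof
    fix c d assume c: "c \<in> P" and d: "d \<in> P" and eq: "F c = F d"
    have "(\<Sum>i<n. (c i - d i) * g i) = 0"
      using eq unfolding F_def by (simp add: left_diff_distrib sum_subtractf)
    moreover have "\<forall>i<n. c i - d i \<in> Fq q" using c d unfolding P_def by (auto intro: Fq_diff)
    moreover have "(\<forall>i<n. c i - d i \<in> Fq q) \<and> (\<Sum>i<n. (c i - d i) * g i) = 0 \<longrightarrow> (\<forall>i<n. c i - d i = 0)"
      using ind unfolding Fq_lin_indep_def by (rule spec[of _ "\<lambda>i. c i - d i", simplified])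
    ultimately have "\<forall>i<n. c i - d i = 0" by blast
    thus "c = d" using c d unfolding P_def by (intro PiE_ext) auto
  qed
  have sub: "F ` P \<subseteq> Fq_span q n g" unfolding F_def P_def Fq_span_def by (auto simp: PiE_def Pi_def)
  have "q ^ n \<le> card (Fq q :: 'a set) ^ n" using card_Fq by (simp add: power_mono)
  also have "\<dots> = card P" unfolding P_def by (simp add: card_PiE)
  also have "\<dots> = card (F ` P)" using inj by (simp add: card_image)
  also have "\<dots> \<le> card (Fq_span q n g)" using sub by (intro card_mono) auto
  finally show ?thesis .
qed

lemma vanish_span_degree:
  assumes ind: "Fq_lin_indep q n g" and f: "(f::'a poly) \<noteq> 0"
    and z: "\<forall>x\<in>Fq_span q n g. poly f x = 0"
  shows "q ^ n \<le> degree f"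
  using card_span[OF ind] roots_card_le[OF f z] by simp

lemma vanish_span_qdeg:
  assumes ind: "Fq_lin_indep q n g" and f: "(f::'a poly) \<noteq> 0" and fl: "linearized q f"
    and z: "\<forall>x\<in>Fq_span q n g. poly f x = 0"
  shows "n \<le> qdeg q f"
proof -
  have "q ^ n \<le> q ^ qdeg q f" using vanish_span_degree[OF ind f z] lin_degree[OF fl f] by simp
  thus ?thesis using q_ge2 by (simp add: power_le_imp_le_exp)
qed

end

lemma pcompose_Xpow: "([:0, 1:] ^ k) \<circ>\<^sub>p p = (p :: 'a::comm_ring_1 poly) ^ k"
proof (induction k)
  case 0 thus ?case by (simp add: pcompose_1)
next
  case (Suc k)
  have "[:0, 1:] \<circ>\<^sub>p p = p" by (simp add: pcompose_pCons)
  moreover have "([:0, 1:] ^ Suc k) \<circ>\<^sub>p p = ([:0, 1:] \<circ>\<^sub>p p) * (([:0, 1:] ^ k) \<circ>\<^sub>p p)"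
    by (simp only: power_Suc pcompose_mult)
  ultimately show ?case using Suc by simp
qed

lemma pcompose_monom: "monom c k \<circ>\<^sub>p p = smult c ((p :: 'a::comm_ring_1 poly) ^ k)"
  by (simp add: monom_altdef pcompose_smult pcompose_Xpow)

context ffqm begin

lemma Pi_g_eq:
  assumes ind: "Fq_lin_indep q n (g :: nat \<Rightarrow> 'a)"
  shows "Pi_g q n g = ann q g n"
proof -
  define S where "S = Fq_span q n (g :: nat \<Rightarrow> 'a)"
  define P where "P = (\<Prod>u\<in>S. [:- u, 1:])"
  define A where "A = ann q g n"
  have fin: "finite S" by simp
  have cS1: "card S \<ge> q ^ n" unfolding S_def by (rule card_span[OF ind])
  have vanA: "\<forall>x\<in>S. poly A x = 0" unfolding A_def S_def using ann_vanish by blast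
  have cS2: "card S \<le> q ^ n" using roots_card_le[OF _ vanA] ann_nz ann_degree unfolding A_def by metis
  have cS: "card S = q ^ n" using cS1 cS2 by simp
  have dP: "degree P = q ^ n" unfolding P_def using cS by (simp add: degree_prod_sum_eq)
  have lP: "lead_coeff P = 1" unfolding P_def by (simp add: lead_coeff_prod)
  have vanP: "\<forall>x\<in>S. poly P x = 0" unfolding P_def using fin by (auto simp: poly_prod)
  define D where "D = A - P"
  have dA: "degree A = q ^ n" "lead_coeff A = 1" unfolding A_def using ann_degree ann_lc by auto
  have cD: "coeff D (q ^ n) = 0" unfolding D_def using dA dP lP by simp
  have dD: "degree D \<le> q ^ n" unfolding D_def by (rule degree_diff_le) (use dA dP in simp_all)
  show ?thesis
  proof (rule ccontr)
    assume "Pi_g q n g \<noteq> ann q g n"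
    hence Dnz: "D \<noteq> 0" unfolding D_def A_def P_def S_def Pi_g_def by simp
    have "degree D \<noteq> q ^ n" using cD Dnz by (metis leading_coeff_0_iff)
    hence "degree D < q ^ n" using dD by simp
    moreover have "card S \<le> degree D" using roots_card_le[OF Dnz] vanA vanP unfolding D_def by simp
    ultimately show False using cS by simp
  qed
qed

lemma div_ann:
  assumes ind: "Fq_lin_indep q n (g :: nat \<Rightarrow> 'a)"
  shows "linearized q h \<Longrightarrow> (\<forall>x\<in>Fq_span q n g. poly h x = 0) \<Longrightarrow>
         \<exists>\<beta>. linearized q \<beta> \<and> h = \<beta> \<circ>\<^sub>p ann q g n"
proof (induction "degree h" arbitrary: h rule: less_induct)
  case less
  define P where "P = ann q (g :: nat \<Rightarrow> 'a) n"
  have Pl: "linearized q P" "degree P = q ^ n" "lead_coeff P = 1" "P \<noteq> 0"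
    unfolding P_def using ann_lin ann_degree ann_lc ann_nz by auto
  show ?case
  proof (cases "h = 0")
    case True thus ?thesis by (intro exI[of _ 0]) simp
  next
    case False
    define d where "d = qdeg q h"
    have dh: "degree h = q ^ d" unfolding d_def using lin_degree[OF less.prems(1) False] .
    have nd: "n \<le> d" unfolding d_def using vanish_span_qdeg[OF ind False less.prems(1) less.prems(2)] .
    define c where "c = lead_coeff h"
    define s where "s = d - n"
    define T where "T = monom c (q ^ s)"
    have TP: "T \<circ>\<^sub>p P = smult c (P ^ (q ^ s))" unfolding T_def by (rule pcompose_monom)
    have dPs: "degree (P ^ (q ^ s)) = q ^ d" using Pl nd
      by (simp add: degree_power_eq s_def power_add[symmetric] mult.commute)
    have lPs: "coeff (P ^ (q ^ s)) (q ^ d) = 1" using lead_coeff_power[of P "q ^ s"] Pl dPs by simp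
    define h' where "h' = h - T \<circ>\<^sub>p P"
    have Tl: "linearized q T" unfolding T_def by (rule lin_monom)
    have h'l: "linearized q h'" unfolding h'_def using less.prems(1) Tl Pl by (intro lin_diff lin_pcomp)
    have h'c: "coeff h' (q ^ d) = 0" unfolding h'_def TP using lPs dh c_def by simp
    have h'd: "degree h' \<le> q ^ d" unfolding h'_def TP
      by (rule degree_diff_le) (use dh dPs degree_smult_le[of c "P ^ (q ^ s)"] in simp_all)
    have h'v: "\<forall>x\<in>Fq_span q n g. poly h' x = 0"
    proof
      fix x assume x: "x \<in> Fq_span q n g"
      have "poly P x = 0" unfolding P_def using ann_vanish[OF x] .
      thus "poly h' x = 0" unfolding h'_def using less.prems(2) x lin_poly0[OF Tl]
        by (simp add: poly_pcompose)
    qed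
    show ?thesis
    proof (cases "h' = 0")
      case True
      hence "h = T \<circ>\<^sub>p P" unfolding h'_def by simp
      thus ?thesis using Tl unfolding P_def by blast
    next
      case False
      have "degree h' \<noteq> q ^ d" using h'c False by (metis leading_coeff_0_iff)
      hence "degree h' < degree h" using h'd dh by simp
      then obtain \<beta>' where b: "linearized q \<beta>'" "h' = \<beta>' \<circ>\<^sub>p ann q g n"
        using less.hyps[OF _ h'l h'v] by blast
      have "h = (\<beta>' + T) \<circ>\<^sub>p ann q g n" using b(2) unfolding h'_def P_def pcompose_add
        by (simp add: algebra_simps eq_diff_eq)
      thus ?thesis using b(1) Tl lin_add by blast
    qed
  qed
qed

end

lemma poly_eval_hom: "comm_ring_hom (\<lambda>p. poly p (a::'a::comm_ring_1))"
  by unfold_locales (auto simp: poly_mult)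

definition colmat :: "nat \<Rightarrow> nat \<Rightarrow> (nat \<Rightarrow> 'a::field) \<Rightarrow> (nat \<Rightarrow> nat) \<Rightarrow> 'a mat" where
  "colmat q n g \<sigma> = mat n n (\<lambda>(j, l). g (\<sigma> l) ^ (q ^ j))"

definition sig :: "nat \<Rightarrow> nat \<Rightarrow> nat \<Rightarrow> nat" where
  "sig n i l = (if l < i then l else if l < n - 1 then Suc l else i)"

lemma colmat_swap:
  assumes "i < n - 1"
  shows "colmat q n g (sig n i) = swapcols i (n - 1) (colmat q n g (sig n (Suc i)))"
  using assms by (intro eq_matI) (auto simp: colmat_def sig_def mat_swapcols_def)

lemma colmat_carrier: "colmat q n g \<sigma> \<in> carrier_mat n n"
  by (simp add: colmat_def)

lemma det_colmat_sig:
  "i < n \<Longrightarrow> det (colmat q n g (sig n i)) = (-1) ^ (n - 1 - i) * det (moore q n g)"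
proof (induction "n - 1 - i" arbitrary: i)
  case 0
  hence i: "i = n - 1" by simp
  have si: "\<And>b. b < n \<Longrightarrow> sig n i b = b" using i by (auto simp: sig_def)
  have "colmat q n g (sig n i) = moore q n g"
    by (intro eq_matI) (simp_all add: colmat_def moore_def si)
  thus ?case using 0 by simp
next
  case (Suc k)
  hence i: "i < n - 1" and k: "k = n - 1 - Suc i" by auto
  have "det (colmat q n g (sig n i)) = - det (colmat q n g (sig n (Suc i)))"
    unfolding colmat_swap[OF i] using i by (intro det_swapcols[of i n "n - 1"] colmat_carrier) auto
  also have "\<dots> = - ((-1) ^ (n - 1 - Suc i) * det (moore q n g))"
    using Suc.hyps(1)[OF k] i by simp
  also have "\<dots> = (-1) ^ (n - 1 - i) * det (moore q n g)"
    using i by (simp add: Suc_diff_Suc[symmetric])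
  finally show ?case .
qed

definition Deval :: "nat \<Rightarrow> nat \<Rightarrow> (nat \<Rightarrow> 'a::field) \<Rightarrow> nat \<Rightarrow> 'a \<Rightarrow> 'a mat" where
  "Deval q n g i a = mat n n (\<lambda>(j, l). (let s = (if l < i then l else Suc l) in
      if s < n then g s ^ (q ^ j) else a ^ (q ^ j)))"

lemma Dmat_carrier: "Dmat q n g i \<in> carrier_mat n n" by (simp add: Dmat_def)

lemma poly_det_Dmat: "poly (det (Dmat q n g i)) a = det (Deval q n g i a)"
proof -
  have "map_mat (\<lambda>p. poly p a) (Dmat q n g i) = Deval q n g i a"
    by (intro eq_matI) (auto simp: Dmat_def Deval_def qmonom_def poly_monom Let_def)
  thus ?thesis using comm_ring_hom.hom_det[OF poly_eval_hom, of a "Dmat q n g i"] by simp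
qed

lemma Deval_same: "i < n \<Longrightarrow> Deval q n g i (g i) = colmat q n g (sig n i)"
  by (intro eq_matI) (auto simp: Deval_def colmat_def sig_def Let_def)

lemma Deval_other:
  assumes "i < n" "l < n" "l \<noteq> i"
  shows "det (Deval q n g i (g l)) = 0"
proof -
  define l' where "l' = (if l < i then l else l - 1)"
  have l': "l' < n" "l' \<noteq> n - 1" "n - 1 < n" using assms unfolding l'_def by auto
  show ?thesis
  proof (rule det_identical_columns[OF _ l'(2) l'(1) l'(3)])
    show "Deval q n g i (g l) \<in> carrier_mat n n" by (simp add: Deval_def)
    show "col (Deval q n g i (g l)) l' = col (Deval q n g i (g l)) (n - 1)"
      using assms unfolding l'_def by (intro eq_vecI) (auto simp: Deval_def Let_def)
  qed
qed

lemma poly_det_Dmat_g: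
  assumes "i < n" "l < n"
  shows "poly (det (Dmat q n g i)) (g l) = (if l = i then (-1) ^ (n - 1 - i) * det (moore q n g) else 0)"
  using assms by (simp add: poly_det_Dmat Deval_same det_colmat_sig Deval_other)

lemma monom_mult_const: "degree (k::'a::comm_ring_1 poly) = 0 \<Longrightarrow> monom 1 m * k = monom (coeff k 0) m"
proof -
  assume "degree k = 0"
  hence "k = monom (coeff k 0) 0" using degree_0_id by (metis monom_0)
  hence "monom 1 m * k = monom 1 m * monom (coeff k 0) 0" by simp
  also have "\<dots> = monom (coeff k 0) m" by (simp add: mult_monom)
  finally show ?thesis .
qed

context ffq begin

lemma lin_det_Dmat:
  assumes "i < n"
  shows "linearized q (det (Dmat q n g i) :: 'a poly)"
proof -
  define D where "D = Dmat q n g i"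
  have D: "D \<in> carrier_mat n n" unfolding D_def by (rule Dmat_carrier)
  have n1: "n - 1 < n" using assms by simp
  have "det D = (\<Sum>j<n. D $$ (j, n - 1) * cofactor D j (n - 1))"
    by (rule laplace_expansion_column[OF D n1])
  also have "\<dots> = (\<Sum>j<n. monom 1 (q ^ j) * cofactor D j (n - 1))"
    using assms by (intro sum.cong refl) (auto simp: D_def Dmat_def qmonom_def Let_def)
  finally have eq: "det D = \<dots>" .
  have cof: "degree (cofactor D j (n - 1)) = 0" if j: "j < n" for j
  proof -
    define B where "B = mat_delete D j (n - 1)"
    have B: "B \<in> carrier_mat (n - 1) (n - 1)" unfolding B_def using mat_delete_carrier[OF D] .
    have "\<And>a b. a < n - 1 \<Longrightarrow> b < n - 1 \<Longrightarrow> degree (B $$ (a, b)) \<le> 0"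
      unfolding B_def D_def mat_delete_def Dmat_def using assms by (auto simp: Let_def)
    hence dB: "degree (det B) \<le> 0 * (n - 1)" by (rule degree_det_le[OF _ B])
    have dm: "degree ((-1::'a poly) ^ (j + (n - 1))) = 0"
      using degree_power_le[of "-1::'a poly" "j + (n - 1)"] by simp
    have "degree (cofactor D j (n - 1)) \<le> degree ((-1::'a poly) ^ (j + (n - 1))) + degree (det B)"
      unfolding cofactor_def B_def by (rule degree_mult_le)
    thus ?thesis using dB dm by simp
  qed
  show ?thesis unfolding D_def[symmetric] eq
  proof (intro lin_sum)
    fix j assume "j \<in> {..<n}"
    hence "monom 1 (q ^ j) * cofactor D j (n - 1) = monom (coeff (cofactor D j (n - 1)) 0) (q ^ j)"
      using monom_mult_const[OF cof] by simp
    thus "linearized q (monom 1 (q ^ j) * cofactor D j (n - 1))" by (simp only: lin_monom)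
  qed
qed

end

context ffqm begin

lemma moore_nz:
  assumes ind: "Fq_lin_indep q n (g :: nat \<Rightarrow> 'a)"
  shows "det (moore q n g) \<noteq> 0"
proof
  assume d0: "det (moore q n g) = 0"
  define M where "M = moore q n g"
  have M: "M \<in> carrier_mat n n" unfolding M_def moore_def by simp
  have "det (transpose_mat M) = 0" using d0 det_transpose[OF M] unfolding M_def by simp
  then obtain v where v: "v \<in> carrier_vec n" "v \<noteq> 0\<^sub>v n" "transpose_mat M *\<^sub>v v = 0\<^sub>v n"
    using det_0_iff_vec_prod_zero_field[of "transpose_mat M" n] M by auto
  define V where "V = (\<Sum>j<n. monom (v $ j) (q ^ j))"
  have Vl: "linearized q V" unfolding V_def by (intro lin_sum lin_monom)
  have pV: "poly V x = (\<Sum>j<n. v $ j * x ^ (q ^ j))" for x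
    unfolding V_def by (simp add: poly_sum poly_monom)
  have vg: "poly V (g l) = 0" if l: "l < n" for l
  proof -
    have "(transpose_mat M *\<^sub>v v) $ l = 0" using v(3) l by simp
    moreover have "(transpose_mat M *\<^sub>v v) $ l = (\<Sum>j<n. v $ j * g l ^ (q ^ j))"
      using l v(1) M by (simp add: scalar_prod_def M_def moore_def lessThan_atLeast0 mult.commute)
    ultimately show ?thesis using pV by simp
  qed
  have van: "\<forall>x\<in>Fq_span q n g. poly V x = 0"
    using lin_vanish_span[OF Vl] vg by blast
  obtain j where j: "j < n" "v $ j \<noteq> 0" using v(1,2) by (metis eq_vecI index_zero_vec(1,2) carrier_vecD)
  have inj: "\<And>a b. q ^ a = q ^ b \<longleftrightarrow> a = b" using q_ge2 by (simp add: power_inject_exp)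
  have cV: "coeff V k = (\<Sum>j'<n. if q ^ j' = k then v $ j' else 0)" for k
    unfolding V_def by (simp add: coeff_sum coeff_monom)
  have "coeff V (q ^ j) = v $ j" unfolding cV using j(1) inj by (simp add: sum.delta)
  hence Vnz: "V \<noteq> 0" using j by auto
  have "\<forall>k>q ^ n - 1. coeff V k = 0"
  proof (intro allI impI)
    fix k assume k: "k > q ^ n - 1"
    have "\<And>j'. j' < n \<Longrightarrow> q ^ j' \<noteq> k"
    proof -
      fix j' assume "j' < n"
      hence "q ^ j' < q ^ n" using q_ge2 by simp
      thus "q ^ j' \<noteq> k" using k by simp
    qed
    thus "coeff V k = 0" unfolding cV by simp
  qed
  hence "degree V \<le> q ^ n - 1" by (rule degree_le)
  moreover have "q ^ n \<le> degree V" by (rule vanish_span_degree[OF ind Vnz van])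
  moreover have "q ^ n > 0" using q_pos by simp
  ultimately show False by linarith
qed

lemma lin_Lambda: "n \<ge> 1 \<Longrightarrow> linearized q (Lambda_gr q n (g::nat \<Rightarrow> 'a) r)"
  unfolding Lambda_gr_def by (intro lin_sum lin_smult lin_det_Dmat) auto

lemma Lambda_eval:
  assumes ind: "Fq_lin_indep q n (g :: nat \<Rightarrow> 'a)" and l: "l < n"
  shows "poly (Lambda_gr q n g r) (g l) = r l"
proof -
  have dz: "det (moore q n g) \<noteq> 0" by (rule moore_nz[OF ind])
  have "poly (Lambda_gr q n g r) (g l) =
     (\<Sum>i<n. (-1) ^ (n - 1 - i) * r i / det (moore q n g) * poly (det (Dmat q n g i)) (g l))"
    unfolding Lambda_gr_def by (simp add: poly_sum)
  also have "\<dots> = (\<Sum>i<n. if i = l then r l else 0)"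
  proof (intro sum.cong refl)
    fix i assume i: "i \<in> {..<n}"
    show "(-1) ^ (n - 1 - i) * r i / det (moore q n g) * poly (det (Dmat q n g i)) (g l)
          = (if i = l then r l else 0)"
    proof (cases "i = l")
      case True
      have "((-1::'a) ^ (n - 1 - i)) * ((-1) ^ (n - 1 - i)) = 1"
        by (simp add: power_mult_distrib[symmetric])
      thus ?thesis using True i l dz by (simp add: poly_det_Dmat_g field_simps)
    next
      case False thus ?thesis using i l by (simp add: poly_det_Dmat_g)
    qed
  qed
  also have "\<dots> = r l" using l by (simp add: sum.delta)
  finally show ?thesis .
qed

end

lemma pcompose_X_left: "[:0, 1:] \<circ>\<^sub>p p = (p :: 'a::comm_ring_1 poly)"
  by (simp add: pcompose_pCons)

context ffqm begin

lemma deg_lt_qpow: "linearized q (p::'a poly) \<Longrightarrow> (p = 0 \<or> qdeg q p < A) \<Longrightarrow> degree p < q ^ A"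
proof -
  assume l: "linearized q p" and d: "p = 0 \<or> qdeg q p < A"
  show ?thesis
  proof (cases "p = 0")
    case True thus ?thesis using q_pos by simp
  next
    case False
    hence "qdeg q p < A" using d by simp
    hence "q ^ qdeg q p < q ^ A" using q_ge2 by simp
    thus ?thesis using lin_degree[OF l False] by simp
  qed
qed

lemma key:
  fixes g r :: "nat \<Rightarrow> 'a" and f1 f2 h1 h2 mm :: "'a poly" and t k n :: nat and v :: "nat \<Rightarrow> 'a"
    and MM :: "'a lvec set"
  assumes ind: "Fq_lin_indep q n g"
   and k: "1 \<le> k" "2 * t \<le> n - k" "k \<le> n"
   and Mchar: "\<And>x y. (x, y) \<in> MM \<Longrightarrow> linearized q x \<and> linearized q y \<and> (\<forall>i<n. poly x (g i) + poly y (r i) = 0)"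
   and Mu: "\<And>E mm. linearized q E \<Longrightarrow> linearized q mm \<Longrightarrow> (\<forall>i<n. poly E (poly mm (g i) - r i) = 0)
            \<Longrightarrow> (- (E \<circ>\<^sub>p mm), E) \<in> MM"
   and b1M: "(f1, f2) \<in> MM" and b2M: "(h1, h2) \<in> MM"
   and span: "\<And>x y. (x, y) \<in> MM \<Longrightarrow> \<exists>c1 c2. linearized q c1 \<and> linearized q c2 \<and>
                 x = c1 \<circ>\<^sub>p f1 + c2 \<circ>\<^sub>p h1 \<and> y = c1 \<circ>\<^sub>p f2 + c2 \<circ>\<^sub>p h2"
   and f1: "f1 \<noteq> 0" "f2 = 0 \<or> qdeg q f2 + k \<le> qdeg q f1"
   and h2: "h2 \<noteq> 0" "h1 = 0 \<or> qdeg q h1 < qdeg q h2 + k"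
   and mm: "linearized q mm" "mm = 0 \<or> qdeg q mm < k"
   and err: "\<forall>i<n. poly mm (g i) - r i \<in> Fq_span q t v"
  shows "qdeg q h2 + k \<le> qdeg q f1 \<and> h1 = - (h2 \<circ>\<^sub>p mm)"
proof -
  have b1: "linearized q f1" "linearized q f2" "\<forall>i<n. poly f1 (g i) + poly f2 (r i) = 0"
    using Mchar[OF b1M] by auto
  have b2: "linearized q h1" "linearized q h2" using Mchar[OF b2M] by auto
  have F4: "n \<le> qdeg q f1 + t"
  proof -
    define H where "H = f1 + f2 \<circ>\<^sub>p mm"
    have Hl: "linearized q H" unfolding H_def using b1 mm by (intro lin_add lin_pcomp)
    have dH: "degree H = degree f1"
    proof (cases "f2 = 0 \<or> mm = 0")
      case True
      hence "f2 \<circ>\<^sub>p mm = 0" using lin_pcomp_0[OF b1(2)] by auto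
      thus ?thesis unfolding H_def by simp
    next
      case False
      hence q1: "qdeg q (f2 \<circ>\<^sub>p mm) = qdeg q f2 + qdeg q mm" using qdeg_pcomp b1 mm by auto
      have "qdeg q (f2 \<circ>\<^sub>p mm) < qdeg q f1" using q1 False f1(2) mm(2) by auto
      hence "degree (f2 \<circ>\<^sub>p mm) < q ^ qdeg q f1"
        using deg_lt_qpow[of "f2 \<circ>\<^sub>p mm" "qdeg q f1"] lin_pcomp b1 mm by auto
      hence "degree (f2 \<circ>\<^sub>p mm) < degree f1" using lin_degree[OF b1(1) f1(1)] by simp
      thus ?thesis unfolding H_def by (rule degree_add_eq_left)
    qed
    have Hnz: "H \<noteq> 0" using dH lin_degree_pos[OF b1(1) f1(1)] by auto
    have qH: "qdeg q H = qdeg q f1" using lin_degree[OF Hl Hnz] dH lin_degree[OF b1(1) f1(1)]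
      by (metis qdeg_eq)
    define E2 where "E2 = ann q (\<lambda>j. poly f2 (v j)) t"
    have E2: "linearized q E2" "E2 \<noteq> 0" "qdeg q E2 = t" unfolding E2_def
      by (rule ann_lin, rule ann_nz, rule ann_qdeg)
    have "poly (E2 \<circ>\<^sub>p H) (g i) = 0" if i: "i < n" for i
    proof -
      have e1: "poly f1 (g i) = - poly f2 (r i)" using b1(3) i by (simp add: eq_neg_iff_add_eq_0)
      have "poly H (g i) = poly f1 (g i) + poly f2 (poly mm (g i))" unfolding H_def by (simp add: poly_pcompose)
      also have "\<dots> = poly f2 (poly mm (g i) - r i)" by (simp add: e1 lin_poly_diff[OF b1(2)])
      finally have "poly H (g i) = poly f2 (poly mm (g i) - r i)" .
      hence "poly H (g i) \<in> Fq_span q t (\<lambda>j. poly f2 (v j))"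
        using lin_poly_span[OF b1(2)] err i by simp
      thus ?thesis unfolding E2_def by (simp add: poly_pcompose ann_vanish)
    qed
    hence van: "\<forall>x\<in>Fq_span q n g. poly (E2 \<circ>\<^sub>p H) x = 0"
      using lin_vanish_span[OF lin_pcomp[OF E2(1) Hl]] by blast
    have "n \<le> qdeg q (E2 \<circ>\<^sub>p H)"
      by (rule vanish_span_qdeg[OF ind pcomp_nz[OF E2(1) Hl E2(2) Hnz] lin_pcomp[OF E2(1) Hl] van])
    thus ?thesis using qdeg_pcomp[OF E2(1) Hl E2(2) Hnz] E2(3) qH by simp
  qed
  have tk: "t + k \<le> qdeg q f1" using F4 k by linarith
  define E where "E = ann q v t"
  have E: "linearized q E" "E \<noteq> 0" "qdeg q E = t" "degree E = q ^ t" unfolding E_def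
    by (rule ann_lin, rule ann_nz, rule ann_qdeg, rule ann_degree)
  have Ev: "\<forall>i<n. poly E (poly mm (g i) - r i) = 0" unfolding E_def using err ann_vanish by blast
  have uM: "(- (E \<circ>\<^sub>p mm), E) \<in> MM" by (rule Mu[OF E(1) mm(1) Ev])
  obtain c1 c2 where c: "linearized q c1" "linearized q c2"
     "- (E \<circ>\<^sub>p mm) = c1 \<circ>\<^sub>p f1 + c2 \<circ>\<^sub>p h1" "E = c1 \<circ>\<^sub>p f2 + c2 \<circ>\<^sub>p h2"
    using span[OF uM] by blast
  have c10: "c1 = 0"
  proof (rule ccontr)
    assume c1: "c1 \<noteq> 0"
    define A where "A = qdeg q c1 + qdeg q f1"
    have dA: "degree (c1 \<circ>\<^sub>p f1) = q ^ A" unfolding A_def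
      using lin_degree[OF lin_pcomp[OF c(1) b1(1)] pcomp_nz[OF c(1) b1(1) c1 f1(1)]]
        qdeg_pcomp[OF c(1) b1(1) c1 f1(1)] by simp
    show False
    proof (cases "c2 = 0 \<or> qdeg q c2 + qdeg q h2 + k \<le> A")
      case True
      have "c2 \<circ>\<^sub>p h1 = 0 \<or> qdeg q (c2 \<circ>\<^sub>p h1) < A"
      proof (cases "c2 = 0 \<or> h1 = 0")
        case True thus ?thesis using lin_pcomp_0[OF c(2)] by auto
      next
        case False
        hence "qdeg q (c2 \<circ>\<^sub>p h1) = qdeg q c2 + qdeg q h1" using qdeg_pcomp c(2) b2(1) by auto
        thus ?thesis using False True h2(2) by auto
      qed
      hence "degree (c2 \<circ>\<^sub>p h1) < q ^ A" using deg_lt_qpow lin_pcomp[OF c(2) b2(1)] by blast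
      hence "degree (c1 \<circ>\<^sub>p f1 + c2 \<circ>\<^sub>p h1) = q ^ A" using dA degree_add_eq_left by metis
      hence dEm: "degree (E \<circ>\<^sub>p mm) = q ^ A" using c(3) degree_minus by metis
      hence "mm \<noteq> 0" using q_pos lin_pcomp_0[OF E(1)] by (metis degree_0 less_numeral_extra(3) zero_less_power)
      hence "qdeg q (E \<circ>\<^sub>p mm) = t + qdeg q mm" "qdeg q mm < k"
        using qdeg_pcomp[OF E(1) mm(1) E(2)] E(3) mm(2) by auto
      moreover have "qdeg q (E \<circ>\<^sub>p mm) = A" using dEm qdeg_eq by blast
      ultimately have "A < t + k" by simp
      moreover have "qdeg q f1 \<le> A" unfolding A_def by simp
      ultimately show False using tk by simp
    next
      case False
      hence c2: "c2 \<noteq> 0" and B: "A < qdeg q c2 + qdeg q h2 + k" by auto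
      define Bq where "Bq = qdeg q c2 + qdeg q h2"
      have dB: "degree (c2 \<circ>\<^sub>p h2) = q ^ Bq" unfolding Bq_def
        using lin_degree[OF lin_pcomp[OF c(2) b2(2)] pcomp_nz[OF c(2) b2(2) c2 h2(1)]]
          qdeg_pcomp[OF c(2) b2(2) c2 h2(1)] by simp
      have "c1 \<circ>\<^sub>p f2 = 0 \<or> qdeg q (c1 \<circ>\<^sub>p f2) < Bq"
      proof (cases "f2 = 0")
        case True thus ?thesis using lin_pcomp_0[OF c(1)] by auto
      next
        case False
        hence "qdeg q (c1 \<circ>\<^sub>p f2) = qdeg q c1 + qdeg q f2" using qdeg_pcomp c(1) b1(2) c1 by auto
        thus ?thesis using False f1(2) B unfolding A_def Bq_def by auto
      qed
      hence "degree (c1 \<circ>\<^sub>p f2) < q ^ Bq" using deg_lt_qpow lin_pcomp[OF c(1) b1(2)] by blast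
      hence "degree (c1 \<circ>\<^sub>p f2 + c2 \<circ>\<^sub>p h2) = q ^ Bq" using dB degree_add_eq_right by metis
      hence "q ^ t = q ^ Bq" using c(4) E(4) by simp
      hence "t = Bq" using q_ge2 by (simp add: power_inject_exp)
      hence "A < t + k" using B unfolding Bq_def by simp
      moreover have "qdeg q f1 \<le> A" unfolding A_def by simp
      ultimately show False using tk by simp
    qed
  qed
  have eqs: "- (E \<circ>\<^sub>p mm) = c2 \<circ>\<^sub>p h1" "E = c2 \<circ>\<^sub>p h2" using c(3,4) c10 by auto
  have c2: "c2 \<noteq> 0" using eqs(2) E(2) by auto
  have "t = qdeg q c2 + qdeg q h2" using eqs(2) E(3) qdeg_pcomp[OF c(2) b2(2) c2 h2(1)] by simp
  hence part1: "qdeg q h2 + k \<le> qdeg q f1" using tk by simp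
  have "c2 \<circ>\<^sub>p h1 = - (c2 \<circ>\<^sub>p (h2 \<circ>\<^sub>p mm))" using eqs by (simp add: pcompose_assoc)
  hence "c2 \<circ>\<^sub>p h1 + c2 \<circ>\<^sub>p (h2 \<circ>\<^sub>p mm) = 0" by simp
  hence z: "c2 \<circ>\<^sub>p (h1 + h2 \<circ>\<^sub>p mm) = 0" using lin_pcomp_add[OF c(2)] by simp
  have Zl: "linearized q (h1 + h2 \<circ>\<^sub>p mm)" using b2 mm by (intro lin_add lin_pcomp)
  have "h1 + h2 \<circ>\<^sub>p mm = 0" using pcomp_nz[OF c(2) Zl c2] z by blast
  hence "h1 = - (h2 \<circ>\<^sub>p mm)" by (simp add: eq_neg_iff_add_eq_0)
  thus ?thesis using part1 by simp
qed

end

lemma char_dvd_card: "CHAR('a::{finite,comm_ring_1}) dvd card (UNIV :: 'a set)"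
proof -
  have "(\<Sum>x\<in>(UNIV::'a set). x) = (\<Sum>x\<in>UNIV. x + 1)"
    by (rule sum.reindex_bij_witness[of _ "\<lambda>y. y + 1" "\<lambda>y. y - 1"]) auto
  also have "\<dots> = (\<Sum>x\<in>(UNIV::'a set). x) + of_nat (card (UNIV :: 'a set))"
    by (simp add: sum.distrib)
  finally have "of_nat (card (UNIV :: 'a set)) = (0::'a)" by simp
  thus ?thesis by (simp add: of_nat_eq_0_iff_char_dvd)
qed

lemma rank_ex:
  assumes "\<And>i. i < n \<Longrightarrow> (a i - b i :: 'a::field) \<in> Fq_span q n (\<lambda>i. a i - b i)"
  shows "(\<exists>v. \<forall>i<n. a i - b i \<in> Fq_span q (rank_dist q n a b) v) \<and> rank_dist q n a b \<le> n"
proof -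
  define P where "P = (\<lambda>d. \<exists>v. \<forall>i<n. a i - b i \<in> Fq_span q d v)"
  have ex: "P n" unfolding P_def using assms by blast
  have "P (Least P)" using ex by (rule LeastI)
  moreover have "Least P \<le> n" using ex by (rule Least_le)
  ultimately show ?thesis unfolding rank_dist_def P_def[symmetric] by (simp add: P_def)
qed

lemma qdeg_eq_gen: "q \<ge> 2 \<Longrightarrow> degree (f::'b::field poly) = q ^ d \<Longrightarrow> qdeg q f = d"
  unfolding qdeg_def
  by (rule the_equality) (auto simp: power_inject_exp)

lemma cands_single:
  fixes q :: nat and l1 l2 :: int
  assumes q2: "q \<ge> 2" and neg: "l2 - l1 < 0"
  shows "alg_cands q l1 l2 0 = {(0 :: 'b::field poly, [:0, 1:])}"
proof (intro equalityI subsetI)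
  fix x :: "'b poly \<times> 'b poly"
  assume x: "x \<in> alg_cands q l1 l2 0"
  obtain \<beta> \<gamma> where xe: "x = (\<beta>, \<gamma>)" by (cases x)
  have bg: "linearized q \<beta>" "qdeg_le q \<beta> (l2 - l1)"
    "linearized q \<gamma>" "\<gamma> \<noteq> 0" "lead_coeff \<gamma> = 1" "qdeg q \<gamma> = 0"
    using x unfolding xe alg_cands_def by auto
  have "\<beta> = 0" using bg(2) neg unfolding qdeg_le_def by auto
  moreover have "\<gamma> = [:0, 1:]"
  proof -
    have "coeff \<gamma> (degree \<gamma>) \<noteq> 0" using bg(4) by simp
    then obtain j where dj: "degree \<gamma> = q ^ j" using bg(3) unfolding linearized_def by blast
    hence "j = 0" using qdeg_eq_gen[OF q2 dj] bg(6) by simp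
    hence dg: "degree \<gamma> = 1" using dj by simp
    have c0: "coeff \<gamma> 0 = 0" using bg(3) q2 unfolding linearized_def
      by (metis not_numeral_le_zero power_eq_0_iff)
    show ?thesis
    proof (rule poly_eqI)
      fix j show "coeff \<gamma> j = coeff [:0, 1:] j"
      proof (cases j)
        case 0 thus ?thesis using c0 by simp
      next
        case (Suc j')
        show ?thesis
        proof (cases j')
          case 0 thus ?thesis using Suc bg(5) dg by simp
        next
          case (Suc j'')
          hence "coeff \<gamma> j = 0" using \<open>j = Suc j'\<close> dg by (simp add: coeff_eq_0)
          thus ?thesis using Suc \<open>j = Suc j'\<close> by simp
        qed
      qed
    qed
  qed
  ultimately show "x \<in> {(0, [:0, 1:])}" unfolding xe by simp
next
  fix x :: "'b poly \<times> 'b poly"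
  assume "x \<in> {(0, [:0, 1:])}"
  hence xe: "x = (0, [:0, 1:])" by simp
  have X0: "qdeg q [:0, 1::'b:] = 0" by (rule qdeg_eq_gen[OF q2]) simp
  have lX: "linearized q [:0, 1::'b:]"
    unfolding linearized_def by (auto simp: coeff_pCons split: nat.splits intro: exI[of _ 0])
  show "x \<in> alg_cands q l1 l2 0"
    unfolding xe alg_cands_def qdeg_le_def using X0 lX by (auto simp: linearized_def)
qed

theorem corollary34:
  fixes q m n k :: nat and g r :: "nat \<Rightarrow> 'a::{finite, field}"
    and b1 b2 :: "'a lvec" and t :: nat
  assumes "\<exists>p e. prime p \<and> e > 0 \<and> q = p ^ e"
    and "m \<ge> 1" and "card (UNIV :: 'a set) = q ^ m"
    and "1 \<le> k" and "k \<le> n"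
    and "Fq_lin_indep q n g"
    and "t = Min ((\<lambda>c. rank_dist q n c r) ` gabidulin q k g)"
    and "2 * t \<le> n - k"
    and "minimal_basis q k (Mod_r q n g r) {b1, b2}"
    and "lpos q k b1 = 1" and "lpos q k b2 = 2"
  shows "card (alg_cands q (wqdeg q k b1) (wqdeg q k b2) 0) = 1
    \<and> alg_list q b1 b2 (wqdeg q k b1) (wqdeg q k b2) 0 \<noteq> {}
    \<and> (\<forall>mm. linearized q mm \<and> degree mm < q ^ k
           \<and> rank_dist q n (codeword g mm) r = t
           \<longrightarrow> mm \<in> alg_list q b1 b2 (wqdeg q k b1) (wqdeg q k b2) 0)"
proof -
  note A = assms
  obtain p e where pe: "prime p" "e > 0" "q = p ^ e" using A(1) by blast
  have finU: "finite (UNIV :: 'a set)" by simp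
  have cpos: "CHAR('a) > 0" by (rule finite_imp_CHAR_pos[OF finU])
  have cpr: "prime CHAR('a)" by (rule prime_CHAR_semidom[OF cpos])
  have "CHAR('a) dvd card (UNIV :: 'a set)" by (rule char_dvd_card)
  hence "CHAR('a) dvd p ^ (e * m)" using A(3) pe(3) by (simp add: power_mult)
  hence "CHAR('a) dvd p" using cpr prime_dvd_power by blast
  hence cp: "CHAR('a) = p" using cpr pe(1) primes_dvd_imp_eq by blast
  interpret F: ffqm q e "TYPE('a)" m
    by unfold_locales (use cpr cp pe A(2,3) in auto)
  define MM where "MM = Mod_r q n g r"
  have n1: "n \<ge> 1" using A(4,5) by simp
  have ind: "Fq_lin_indep q n g" by (rule A(6))
  have PiA: "Pi_g q n g = ann q g n" by (rule F.Pi_g_eq[OF ind])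
  have Pl: "linearized q (Pi_g q n g)" unfolding PiA by (rule F.ann_lin)
  have Pv: "poly (Pi_g q n g) (g i) = 0" if "i < n" for i
    unfolding PiA using F.ann_vanish F.span_mem that by blast
  have Ll: "linearized q (Lambda_gr q n g r)" by (rule F.lin_Lambda[OF n1])
  have Lv: "poly (Lambda_gr q n g r) (g i) = r i" if "i < n" for i
    by (rule F.Lambda_eval[OF ind that])
  have Mchar: "linearized q x \<and> linearized q y \<and> (\<forall>i<n. poly x (g i) + poly y (r i) = 0)"
    if xy: "(x, y) \<in> MM" for x y
  proof -
    obtain \<beta> \<gamma> where bg: "linearized q \<beta>" "linearized q \<gamma>"
      "(x, y) = ladd (lcomp \<beta> (Pi_g q n g, 0)) (lcomp \<gamma> (- Lambda_gr q n g r, [:0, 1:]))"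
      using xy unfolding MM_def Mod_r_def by blast
    have x: "x = \<beta> \<circ>\<^sub>p Pi_g q n g + \<gamma> \<circ>\<^sub>p (- Lambda_gr q n g r)" and y: "y = \<gamma>"
      using bg(3) F.lin_pcomp_0[OF bg(1)] by (auto simp: ladd_def lcomp_def)
    have "linearized q x" unfolding x using bg Pl Ll by (intro F.lin_add F.lin_pcomp F.lin_uminus)
    moreover have "poly x (g i) + poly y (r i) = 0" if i: "i < n" for i
      unfolding x y using Pv[OF i] Lv[OF i] F.lin_poly0[OF bg(1)] F.lin_poly_uminus[OF bg(2)]
      by (simp add: poly_pcompose)
    ultimately show ?thesis using bg(2) y by simp
  qed
  have Mu: "(- (E \<circ>\<^sub>p mm), E) \<in> MM"
    if E: "linearized q E" and mm: "linearized q mm" and ev: "\<forall>i<n. poly E (poly mm (g i) - r i) = 0"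
    for E mm
  proof -
    define h where "h = E \<circ>\<^sub>p (Lambda_gr q n g r - mm)"
    have hl: "linearized q h" unfolding h_def using E mm Ll by (intro F.lin_pcomp F.lin_diff)
    have "poly h (g i) = 0" if i: "i < n" for i
    proof -
      have "poly h (g i) = poly E (r i - poly mm (g i))" unfolding h_def using Lv[OF i] by (simp add: poly_pcompose)
      also have "\<dots> = - poly E (poly mm (g i) - r i)"
        using F.lin_poly_uminus[OF E, of "poly mm (g i) - r i"] by simp
      finally show ?thesis using ev i by simp
    qed
    hence "\<forall>x\<in>Fq_span q n g. poly h x = 0" using F.lin_vanish_span[OF hl] by blast
    then obtain \<beta> where b: "linearized q \<beta>" "h = \<beta> \<circ>\<^sub>p ann q g n" using F.div_ann[OF ind hl] by blast
    have hh: "\<beta> \<circ>\<^sub>p ann q g n = E \<circ>\<^sub>p Lambda_gr q n g r - E \<circ>\<^sub>p mm"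
      using b(2) unfolding h_def F.lin_pcomp_diff[OF E] by simp
    have "\<beta> \<circ>\<^sub>p Pi_g q n g + E \<circ>\<^sub>p (- Lambda_gr q n g r) = - (E \<circ>\<^sub>p mm)"
      by (simp add: PiA hh F.lin_pcomp_uminus[OF E])
    moreover have "\<beta> \<circ>\<^sub>p 0 = 0" by (rule F.lin_pcomp_0[OF b(1)])
    ultimately have "(- (E \<circ>\<^sub>p mm), E) = ladd (lcomp \<beta> (Pi_g q n g, 0)) (lcomp E (- Lambda_gr q n g r, [:0, 1:]))"
      by (simp add: ladd_def lcomp_def)
    thus ?thesis unfolding MM_def Mod_r_def using b(1) E by blast
  qed
  have bas: "is_basis q MM {b1, b2}" using A(9) unfolding minimal_basis_def MM_def by simp
  have b12: "b1 \<noteq> b2" using A(10,11) by auto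
  have lc: "lcombo c {b1, b2} = (c b1 \<circ>\<^sub>p fst b1 + c b2 \<circ>\<^sub>p fst b2, c b1 \<circ>\<^sub>p snd b1 + c b2 \<circ>\<^sub>p snd b2)" for c
    using b12 by (simp add: lcombo_def)
  have MMeq: "MM = {lcombo c {b1, b2} | c. \<forall>h\<in>{b1, b2}. linearized q (c h)}" using bas unfolding is_basis_def by simp
  have indep: "\<And>c. (\<forall>h\<in>{b1, b2}. linearized q (c h)) \<and> lcombo c {b1, b2} = (0, 0) \<Longrightarrow> (\<forall>h\<in>{b1, b2}. c h = 0)"
    using bas unfolding is_basis_def by blast
  define c1 where "c1 = (\<lambda>h. if h = b1 then [:0, 1:] else (0 :: 'a poly))"
  define c2 where "c2 = (\<lambda>h. if h = b2 then [:0, 1:] else (0 :: 'a poly))"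
  have c1l: "\<forall>h\<in>{b1, b2}. linearized q (c1 h)" unfolding c1_def using F.lin_X by simp
  have c2l: "\<forall>h\<in>{b1, b2}. linearized q (c2 h)" unfolding c2_def using F.lin_X by simp
  have "lcombo c1 {b1, b2} = b1" unfolding lc c1_def using b12 by (simp add: pcompose_X_left)
  hence "\<exists>c. b1 = lcombo c {b1, b2} \<and> (\<forall>h\<in>{b1, b2}. linearized q (c h))"
    using c1l by (intro exI[of _ c1]) simp
  hence b1M: "b1 \<in> MM" unfolding MMeq by (simp only: mem_Collect_eq)
  have "lcombo c2 {b1, b2} = b2" unfolding lc c2_def using b12 by (simp add: pcompose_X_left)
  hence "\<exists>c. b2 = lcombo c {b1, b2} \<and> (\<forall>h\<in>{b1, b2}. linearized q (c h))"
    using c2l by (intro exI[of _ c2]) simp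
  hence b2M: "b2 \<in> MM" unfolding MMeq by (simp only: mem_Collect_eq)
  have b1nz: "b1 \<noteq> (0, 0)"
  proof
    assume b0: "b1 = (0, 0)"
    have "lcombo c1 {b1, b2} = (0, 0)" unfolding lc c1_def using b12 b0 by (simp add: pcompose_X_left)
    hence "c1 b1 = 0" using indep[of c1] c1l by blast
    thus False unfolding c1_def by simp
  qed
  obtain f1 f2 where b1e: "b1 = (f1, f2)" by (cases b1)
  obtain h1 h2 where b2e: "b2 = (h1, h2)" by (cases b2)
  have lp1: "lpos q k (f1, f2) = 1" using A(10) b1e by simp
  have lp2: "lpos q k (h1, h2) = 2" using A(11) b2e by simp
  have f1: "f1 \<noteq> 0 \<and> (f2 = 0 \<or> qdeg q f2 + k \<le> qdeg q f1) \<and> wqdeg q k b1 = int (qdeg q f1)"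
  proof (cases "f2 = 0")
    case True
    hence "f1 \<noteq> 0" using b1nz b1e by simp
    thus ?thesis using True unfolding b1e wqdeg_def by simp
  next
    case False
    have nz: "f1 \<noteq> 0" using lp1 False unfolding lpos_def by (auto split: if_splits)
    have gt: "int (qdeg q f1) > int (qdeg q f2) + int k - 1" using lp1 False nz unfolding lpos_def
      by (auto split: if_splits)
    hence "qdeg q f2 + k \<le> qdeg q f1" by linarith
    moreover have "wqdeg q k b1 = int (qdeg q f1)" unfolding b1e wqdeg_def using False nz gt by simp
    ultimately show ?thesis using nz by simp
  qed
  have h2: "h2 \<noteq> 0 \<and> (h1 = 0 \<or> qdeg q h1 < qdeg q h2 + k) \<and> wqdeg q k b2 = int (qdeg q h2) + int k - 1"
  proof -
    have nz: "h2 \<noteq> 0" using lp2 unfolding lpos_def by (auto split: if_splits)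
    show ?thesis
    proof (cases "h1 = 0")
      case True
      thus ?thesis using nz unfolding b2e wqdeg_def by simp
    next
      case False
      have le: "\<not> int (qdeg q h1) > int (qdeg q h2) + int k - 1" using lp2 False nz unfolding lpos_def
        by (auto split: if_splits)
      hence "qdeg q h1 < qdeg q h2 + k" using A(4) by linarith
      moreover have "wqdeg q k b2 = int (qdeg q h2) + int k - 1" unfolding b2e wqdeg_def using False nz le by simp
      ultimately show ?thesis using nz by simp
    qed
  qed
  have l1: "wqdeg q k b1 = int (qdeg q f1)" using f1 by simp
  have l2: "wqdeg q k b2 = int (qdeg q h2) + int k - 1" using h2 by simp
  have span: "\<exists>c1 c2. linearized q c1 \<and> linearized q c2 \<and>
                 x = c1 \<circ>\<^sub>p f1 + c2 \<circ>\<^sub>p h1 \<and> y = c1 \<circ>\<^sub>p f2 + c2 \<circ>\<^sub>p h2" if xyM: "(x, y) \<in> MM" for x y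
  proof -
    obtain c where c: "\<forall>h\<in>{b1, b2}. linearized q (c h)" "(x, y) = lcombo c {b1, b2}"
      using xyM unfolding MMeq by blast
    have "(x, y) = (c b1 \<circ>\<^sub>p fst b1 + c b2 \<circ>\<^sub>p fst b2, c b1 \<circ>\<^sub>p snd b1 + c b2 \<circ>\<^sub>p snd b2)"
      using c(2) lc by simp
    hence "x = c b1 \<circ>\<^sub>p f1 + c b2 \<circ>\<^sub>p h1" "y = c b1 \<circ>\<^sub>p f2 + c b2 \<circ>\<^sub>p h2"
      unfolding b1e b2e by simp_all
    moreover have "linearized q (c b1)" "linearized q (c b2)" using c(1) by auto
    ultimately show ?thesis by blast
  qed
  have rk: "(\<exists>v. \<forall>i<n. a i - r i \<in> Fq_span q (rank_dist q n a r) v) \<and> rank_dist q n a r \<le> n" for a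
  proof -
    have "\<And>i. i < n \<Longrightarrow> a i - r i \<in> Fq_span q n (\<lambda>i. a i - r i)"
      using F.span_mem[of _ n "\<lambda>i. a i - r i"] by simp
    thus ?thesis by (rule rank_ex)
  qed
  define TT where "TT = (\<lambda>c. rank_dist q n c r) ` gabidulin q k g"
  have "TT \<subseteq> {..n}" unfolding TT_def using rk by auto
  hence TTfin: "finite TT" by (rule finite_subset) simp
  have "codeword g 0 \<in> gabidulin q k g" unfolding gabidulin_def mem_Collect_eq
    using F.lin_0 F.q_pos by (intro exI[of _ 0]) simp
  hence TTne: "TT \<noteq> {}" unfolding TT_def by blast
  have "t \<in> TT" unfolding A(7) TT_def[symmetric] using Min_in[OF TTfin TTne] .
  then obtain mm0 where mm0: "linearized q mm0" "degree mm0 < q ^ k" "rank_dist q n (codeword g mm0) r = t"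
    unfolding TT_def gabidulin_def by auto
  have main: "qdeg q h2 + k \<le> qdeg q f1 \<and> h1 = - (h2 \<circ>\<^sub>p mm)"
    if mm: "linearized q mm" "degree mm < q ^ k" "rank_dist q n (codeword g mm) r = t" for mm
  proof -
    obtain v where v: "\<forall>i<n. codeword g mm i - r i \<in> Fq_span q t v" using rk[of "codeword g mm"] mm(3) by auto
    have mmq: "mm = 0 \<or> qdeg q mm < k"
    proof (cases "mm = 0")
      case False
      hence "q ^ qdeg q mm < q ^ k" using F.lin_degree[OF mm(1) False] mm(2) by simp
      thus ?thesis using F.q_ge2 by (simp add: power_less_imp_less_exp)
    qed simp
    show ?thesis
      by (rule F.key[OF ind A(4) A(8) A(5) Mchar Mu b1M[unfolded b1e] b2M[unfolded b2e] span conjunct1[OF f1] conjunct1[OF conjunct2[OF f1]] conjunct1[OF h2] conjunct1[OF conjunct2[OF h2]] mm(1) mmq])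
         (use v in \<open>auto simp: codeword_def\<close>)
  qed
  have ineq: "wqdeg q k b2 - wqdeg q k b1 < 0" using main[OF mm0] l1 l2 by simp
  have cands: "alg_cands q (wqdeg q k b1) (wqdeg q k b2) 0 = {(0, [:0, 1:])}"
    by (rule cands_single[OF F.q_ge2 ineq])
  have cands': "alg_cands q (wqdeg q k b1) (wqdeg q k b2) 0 = {(0 :: 'b::field poly, [:0, 1:])}"
    by (rule cands_single[OF F.q_ge2 ineq])
  have inlist: "mm \<in> alg_list q b1 b2 (wqdeg q k b1) (wqdeg q k b2) 0"
    if mm: "linearized q mm" "degree mm < q ^ k" "rank_dist q n (codeword g mm) r = t" for mm
  proof -
    have h1e: "h1 = - (h2 \<circ>\<^sub>p mm)" using main[OF mm] by simp
    have "ladd (lcomp 0 b1) (lcomp [:0, 1:] b2) = (h1, h2)"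
      unfolding b1e b2e by (simp add: ladd_def lcomp_def pcompose_X_left)
    thus ?thesis unfolding alg_list_def cands using mm(1) h1e by (auto simp: Let_def)
  qed
  show ?thesis using cands' inlist[OF mm0] inlist by auto
qed

end
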